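(* Let $n\ge 1$ and for $x\in\mathbb{R}^n$ define $\Phi_n(x)=\mathbb{E}_{\ell\sim\mathcal{S}^{n-1}}\left[e^{\langle \ell, x\rangle}\right]$, where $\ell$ is uniformly distributed on the Euclidean unit sphere $\mathcal{S}^{n-1}=\{x\in\mathbb{R}^n:\|x\|=1\}$. Then for any $X\in\mathbb{R}^n$, any $\lambda\in\mathbb{R}$ and any $\varepsilon\in(0,1)$, $$\Phi_n(\lambda X)\ge (1-\varepsilon^2)^{n/2}\, e^{\varepsilon\|\lambda X\|}.$$
   Context: $\|\cdot\|$ is the Euclidean norm. For $n=1$, $\mathcal{S}^0=\{-1,1\}$ with the uniform distribution. $\Phi_n$ is called the energy function of the averaged moment generating function. *)

theory Defs
  imports "HOL-Analysis.Analysis"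
begin

text \<open>Uniform (normalized surface) probability measure on the unit sphere of
  a Euclidean space, defined as the cone measure: the image of the uniform
  distribution on the open unit ball under radial projection y \<mapsto> y / |y|.
  For dimension 1 this is the uniform distribution on {-1, 1}.\<close>
definition sphere_uniform :: "'a::euclidean_space measure" where
  "sphere_uniform = distr (uniform_measure lborel (ball 0 1)) borel (\<lambda>y. y /\<^sub>R norm y)"

definition Phi :: "'a::euclidean_space \<Rightarrow> real" where
  "Phi x = (\<integral>l. exp (l \<bullet> x) \<partial>(sphere_uniform :: 'a measure))"

end

theory Submission
  imports Defs "HOL-Probability.Probability"
begin

definition dirv :: "'a::euclidean_space \<Rightarrow> 'a" where "dirv y = y /\<^sub>R norm y"

lemma dirv_meas[measurable]: "dirv \<in> borel_measurable borel"
  unfolding dirv_def by measurable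

lemma norm_dirv_le: "norm (dirv y) \<le> 1"
  by (cases "y = 0") (simp_all add: dirv_def)

lemma dirv_scale: "c > 0 \<Longrightarrow> dirv (c *\<^sub>R y) = dirv y"
  by (simp add: dirv_def)

lemma dirv_neg: "dirv (- y) = - dirv y"
  by (simp add: dirv_def)

lemma ball_borel[measurable]: "ball (x::'a::euclidean_space) r \<in> sets borel"
  by simp

lemma nn_integral_scale:
  fixes f :: "'a::euclidean_space \<Rightarrow> ennreal"
  assumes [measurable]: "f \<in> borel_measurable borel" and c: "c \<noteq> 0"
  shows "(\<integral>\<^sup>+x. f x \<partial>lborel) = ennreal (\<bar>c\<bar>^DIM('a)) * (\<integral>\<^sup>+x. f (c *\<^sub>R x) \<partial>lborel)"
  by (subst lborel_affine[OF c, of 0])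
     (simp add: nn_integral_density nn_integral_distr nn_integral_cmult)

lemma nn_integral_transl:
  fixes f :: "'a::euclidean_space \<Rightarrow> ennreal"
  assumes [measurable]: "f \<in> borel_measurable borel"
  shows "(\<integral>\<^sup>+x. f x \<partial>lborel) = (\<integral>\<^sup>+x. f (t + x) \<partial>lborel)"
  by (subst lborel_affine[of 1 t])
     (simp_all add: nn_integral_density nn_integral_distr nn_integral_cmult)

definition Vb :: "'a::euclidean_space itself \<Rightarrow> ennreal" where
  "Vb _ = emeasure lborel (ball (0::'a) 1)"

lemma ubv_pos: "unit_ball_vol (real DIM('a::euclidean_space)) > 0"
  by (rule unit_ball_vol_pos) simp

lemma Vb_pos: "Vb TYPE('a::euclidean_space) \<noteq> 0"
  using ubv_pos[where 'a='a] by (simp add: Vb_def emeasure_ball del: unit_ball_vol_pos)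

lemma Vb_fin: "Vb TYPE('a::euclidean_space) \<noteq> \<infinity>"
  by (simp add: Vb_def emeasure_ball)

lemma sphere_integral:
  fixes f :: "'a::euclidean_space \<Rightarrow> ennreal"
  assumes [measurable]: "f \<in> borel_measurable borel"
  shows "(\<integral>\<^sup>+l. f l \<partial>(sphere_uniform::'a measure)) =
     (\<integral>\<^sup>+y. f (dirv y) * indicator (ball 0 1) y \<partial>lborel) / Vb TYPE('a)"
  unfolding sphere_uniform_def Vb_def
  by (simp add: nn_integral_distr nn_integral_uniform_measure dirv_def[symmetric])

lemma prob_sphere: "prob_space (sphere_uniform::'a::euclidean_space measure)"
  unfolding sphere_uniform_def
  by (intro prob_space.prob_space_distr prob_space_uniform_measure)
     (use Vb_pos[where 'a='a] Vb_fin[where 'a='a] in \<open>auto simp: Vb_def\<close>)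

lemma sphere_sym:
  fixes f :: "'a::euclidean_space \<Rightarrow> ennreal"
  assumes [measurable]: "f \<in> borel_measurable borel"
  shows "(\<integral>\<^sup>+l. f (- l) \<partial>(sphere_uniform::'a measure)) = (\<integral>\<^sup>+l. f l \<partial>sphere_uniform)"
proof -
  have "(\<integral>\<^sup>+y. f (dirv y) * indicator (ball 0 1) y \<partial>lborel) =
     ennreal (\<bar>-1\<bar>^DIM('a)) * (\<integral>\<^sup>+y. f (dirv ((-1) *\<^sub>R y)) * indicator (ball 0 1) ((-1) *\<^sub>R y) \<partial>lborel)"
    by (rule nn_integral_scale) auto
  also have "\<dots> = (\<integral>\<^sup>+y. f (- dirv y) * indicator (ball 0 1) y \<partial>lborel)"
    by (simp add: dirv_neg indicator_def)
  finally show ?thesis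
    by (simp add: sphere_integral)
qed

lemma ball_scale:
  fixes h :: "'a::euclidean_space \<Rightarrow> ennreal"
  assumes [measurable]: "h \<in> borel_measurable borel" and a: "a > 0"
  shows "(\<integral>\<^sup>+y. h (dirv y) * indicator (ball 0 a) y \<partial>lborel) =
     ennreal (a^DIM('a)) * (\<integral>\<^sup>+y. h (dirv y) * indicator (ball 0 1) y \<partial>lborel)"
proof -
  have "(\<integral>\<^sup>+y. h (dirv y) * indicator (ball 0 a) y \<partial>lborel) =
     ennreal (\<bar>a\<bar>^DIM('a)) * (\<integral>\<^sup>+y. h (dirv (a *\<^sub>R y)) * indicator (ball 0 a) (a *\<^sub>R y) \<partial>lborel)"
    using a by (intro nn_integral_scale) auto
  also have "(\<lambda>y. h (dirv (a *\<^sub>R y)) * indicator (ball 0 a) (a *\<^sub>R y)) = (\<lambda>y. h (dirv y) * indicator (ball 0 1) y)"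
    using a by (auto simp: dirv_scale indicator_def fun_eq_iff)
  finally show ?thesis using a by simp
qed

lemma factorization:
  fixes h :: "'a::euclidean_space \<Rightarrow> ennreal" and k :: "real \<Rightarrow> ennreal"
  assumes [measurable]: "h \<in> borel_measurable borel" "k \<in> borel_measurable borel"
    and fin: "(\<integral>\<^sup>+l. h l \<partial>(sphere_uniform::'a measure)) \<noteq> \<infinity>"
  shows "(\<integral>\<^sup>+y. h (dirv y) * k (norm y) \<partial>lborel) =
     (\<integral>\<^sup>+l. h l \<partial>(sphere_uniform::'a measure)) * (\<integral>\<^sup>+y. k (norm y) \<partial>(lborel::'a measure))"
proof -
  define E where "E = (\<integral>\<^sup>+l. h l \<partial>(sphere_uniform::'a measure))"
  define I1 where "I1 = (\<integral>\<^sup>+y. h (dirv y) * indicator (ball 0 1) y \<partial>(lborel::'a measure))"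
  have EI: "I1 = E * Vb TYPE('a)"
    unfolding E_def I1_def sphere_integral[OF assms(1)]
    using Vb_pos[where 'a='a] Vb_fin[where 'a='a]
    by (simp add: ennreal_divide_times ennreal_divide_self less_top)
  define M1 where "M1 = distr (density (lborel::'a measure) (\<lambda>y. h (dirv y))) borel norm"
  define M2 where "M2 = density (distr (lborel::'a measure) borel norm) (\<lambda>_. E)"
  have em1: "emeasure M1 {..<a} = E * emeasure lborel (ball (0::'a) a)" for a
  proof (cases "a > 0")
    case True
    have "emeasure M1 {..<a} = (\<integral>\<^sup>+y. h (dirv y) * indicator (ball 0 a) y \<partial>(lborel::'a measure))"
      unfolding M1_def
    proof (subst emeasure_distr)
      have "norm -` {..<a} = ball (0::'a) a" by (auto simp: ball_def)
      then show "emeasure (density lborel (\<lambda>y. h (dirv y))) (norm -` {..<a} \<inter> space (density lborel (\<lambda>y. h (dirv y)))) =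
        (\<integral>\<^sup>+y. h (dirv y) * indicator (ball 0 a) y \<partial>(lborel::'a measure))"
        by (simp add: emeasure_density)
    qed auto
    also have "\<dots> = ennreal (a^DIM('a)) * I1"
      unfolding I1_def using True by (rule ball_scale[OF assms(1)])
    also have "emeasure lborel (ball (0::'a) a) = ennreal (a^DIM('a)) * Vb TYPE('a)"
      using True by (simp add: Vb_def emeasure_ball ennreal_mult' mult.commute)
    ultimately show ?thesis by (simp add: EI mult_ac)
  next
    case False
    then have "{y::'a. norm y < a} = {}" by (auto simp: not_less intro: order.trans[OF _ norm_ge_zero])
    then have "norm -` {..<a} = ({}::'a set)" by auto
    then show ?thesis using False unfolding M1_def
      by (subst emeasure_distr) (auto simp: emeasure_density ball_empty)
  qed
  have em2: "emeasure M2 {..<a} = E * emeasure lborel (ball (0::'a) a)" for a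
    unfolding M2_def
    by (subst emeasure_density) (auto simp: nn_integral_cmult_indicator emeasure_distr vimage_def ball_def)
  have "M1 = M2"
  proof (rule measure_eqI_generator_eq[where E="range lessThan" and \<Omega>=UNIV and A="\<lambda>i. {..<real i}"])
    show "Int_stable (range lessThan :: real set set)"
    proof (rule Int_stableI)
      fix a b :: "real set" assume "a \<in> range lessThan" "b \<in> range lessThan"
      then obtain x y where "a = {..<x}" "b = {..<y}" by auto
      moreover have "{..<x} \<inter> {..<y} = {..<min x y}" by auto
      ultimately show "a \<inter> b \<in> range lessThan" by auto
    qed
    show "sets M1 = sigma_sets UNIV (range lessThan)" "sets M2 = sigma_sets UNIV (range lessThan)"
      unfolding M1_def M2_def by (simp_all add: borel_Iio)
    show "emeasure M1 X = emeasure M2 X" if "X \<in> range lessThan" for X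
      using that em1 em2 by auto
    show "emeasure M1 {..<real i} \<noteq> \<infinity>" for i
      using fin emeasure_lborel_ball_finite[of "0::'a" "real i"]
      by (simp add: em1 E_def ennreal_mult_eq_top_iff)
  qed (auto simp: reals_Archimedean2)
  then have "(\<integral>\<^sup>+x. k x \<partial>M1) = (\<integral>\<^sup>+x. k x \<partial>M2)" by simp
  then show ?thesis
    unfolding M1_def M2_def E_def
    by (simp add: nn_integral_distr nn_integral_density nn_integral_cmult)
qed

lemma cosh_series: "(\<lambda>m. x^(2*m) / fact (2*m)) sums cosh (x::real)"
proof -
  have sm: "summable (\<lambda>m. x^(2*m) / fact (2*m))"
  proof (rule summable_comparison_test)
    show "summable (\<lambda>m. (x\<^sup>2)^m / fact m)"
      using exp_converges[of "x\<^sup>2"] by (simp add: sums_iff divide_inverse mult.commute)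
    show "\<exists>N. \<forall>n\<ge>N. norm (x^(2*n) / fact (2*n)) \<le> (x\<^sup>2)^n / fact n"
    proof (intro exI allI impI)
      fix n :: nat
      have "fact n \<le> (fact (2*n) :: real)" by (intro fact_mono) auto
      moreover have "(fact n :: real) > 0" by simp
      ultimately show "norm (x^(2*n) / fact (2*n)) \<le> (x\<^sup>2)^n / fact n"
      proof -
        have e: "x^(2*n) = (x\<^sup>2)^n" by (simp add: power_mult)
        have "(x\<^sup>2)^n / fact (2*n) \<le> (x\<^sup>2)^n / fact n"
          using divide_left_mono[of "fact n" "fact (2*n)" "(x\<^sup>2)^n"] \<open>fact n \<le> fact (2*n)\<close> by simp
        then show ?thesis unfolding e by simp
      qed
    qed
  qed
  then obtain s where s: "(\<lambda>m. x^(2*m) / fact (2*m)) sums s" by (auto simp: summable_def)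
  have "(\<lambda>n. if even n then x^(2*(n div 2)) / fact (2*(n div 2)) else 0) sums s"
    using sums_if[OF sums_zero s] by simp
  moreover have "(\<lambda>n. if even n then x^(2*(n div 2)) / fact (2*(n div 2)) else 0) =
      (\<lambda>n. if even n then x ^ n /\<^sub>R fact n else 0)"
    by (auto simp: fun_eq_iff divide_inverse mult.commute)
  ultimately have "s = cosh x" using cosh_converges[of x] sums_unique2 by force
  with s show ?thesis by simp
qed

lemma nn_integral_cosh_series:
  fixes z :: "'b \<Rightarrow> real" and q :: "'b \<Rightarrow> real"
  assumes [measurable]: "z \<in> borel_measurable N" "q \<in> borel_measurable N" and q: "\<And>x. q x \<ge> 0"
  shows "(\<integral>\<^sup>+x. ennreal (cosh (t * z x) * q x) \<partial>N) =
    (\<Sum>m. ennreal (t^(2*m) / fact (2*m)) * (\<integral>\<^sup>+x. ennreal (z x ^ (2*m) * q x) \<partial>N))"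
proof -
  have "(\<integral>\<^sup>+x. ennreal (cosh (t * z x) * q x) \<partial>N) =
      (\<integral>\<^sup>+x. (\<Sum>m. ennreal (t^(2*m) / fact (2*m)) * ennreal (z x ^ (2*m) * q x)) \<partial>N)"
  proof (intro nn_integral_cong)
    fix x
    have "(\<lambda>m. (t * z x)^(2*m) / fact (2*m) * q x) sums (cosh (t * z x) * q x)"
      by (intro sums_mult2 cosh_series)
    then have "(\<Sum>m. ennreal ((t * z x)^(2*m) / fact (2*m) * q x)) = ennreal (cosh (t * z x) * q x)"
      using q by (intro suminf_ennreal_eq) (auto simp: power_mult)
    moreover have "\<And>m. ennreal ((t * z x)^(2*m) / fact (2*m) * q x) =
        ennreal (t^(2*m) / fact (2*m)) * ennreal (z x ^ (2*m) * q x)"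
      using q by (subst ennreal_mult[symmetric]) (auto simp: power_mult power_mult_distrib mult_ac)
    ultimately show "ennreal (cosh (t * z x) * q x) =
        (\<Sum>m. ennreal (t^(2*m) / fact (2*m)) * ennreal (z x ^ (2*m) * q x))" by simp
  qed
  also have "\<dots> = (\<Sum>m. (\<integral>\<^sup>+x. ennreal (t^(2*m) / fact (2*m)) * ennreal (z x ^ (2*m) * q x) \<partial>N))"
    by (rule nn_integral_suminf) auto
  also have "\<dots> = (\<Sum>m. ennreal (t^(2*m) / fact (2*m)) * (\<integral>\<^sup>+x. ennreal (z x ^ (2*m) * q x) \<partial>N))"
    by (simp add: nn_integral_cmult)
  finally show ?thesis .
qed

lemma powser_unique:
  fixes a b :: "nat \<Rightarrow> real"
  assumes A: "\<And>x. x \<ge> 0 \<Longrightarrow> (\<lambda>m. a m * x^m) sums f x"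
      and B: "\<And>x. x \<ge> 0 \<Longrightarrow> (\<lambda>m. b m * x^m) sums f x"
  shows "a m = b m"
proof -
  define d where "d m = a m - b m" for m
  have D: "(\<lambda>m. d m * x^m) sums 0" if "x \<ge> 0" for x
    using sums_diff[OF A[OF that] B[OF that]] by (simp add: d_def algebra_simps)
  have "d m = 0"
  proof (induction m rule: less_induct)
    case (less m)
    define g where "g x = (\<Sum>j. d (j + m) * x^j)" for x :: real
    have G: "(\<lambda>j. d (j + m) * x^j) sums 0" if "x > 0" for x
    proof -
      have "(\<lambda>j. d (j + m) * x^(j + m)) sums (0 - (\<Sum>i<m. d i * x^i))"
        using sums_split_initial_segment[OF D[of x]] that by simp
      also have "(\<Sum>i<m. d i * x^i) = 0" using less by simp
      finally have "(\<lambda>j. d (j + m) * x^(j + m) / x^m) sums (0 / x^m)"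
        by (intro sums_divide) simp
      then show ?thesis using that by (simp add: power_add)
    qed
    have g0: "g x = 0" if "x > 0" for x using G[OF that] by (simp add: g_def sums_iff)
    have "summable (\<lambda>j. d (j + m) * 2^j)" using G[of 2] by (simp add: sums_iff)
    then have "isCont g 0" unfolding g_def by (rule isCont_powser) simp
    then have "(g \<longlongrightarrow> g 0) (at_right 0)"
      by (simp add: isCont_def filterlim_at_split)
    moreover have "(g \<longlongrightarrow> 0) (at_right 0)"
    proof (rule tendsto_eventually)
      show "eventually (\<lambda>x. g x = 0) (at_right (0::real))"
        by (rule eventually_at_rightI[of 0 1]) (auto intro: g0)
    qed
    ultimately have "g 0 = 0" using tendsto_unique by (metis trivial_limit_at_right_real)
    then show ?case by (simp add: g_def)
  qed
  then show ?thesis by (simp add: d_def)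
qed

lemma norm_sq_basis: "(norm (y::'a::euclidean_space))\<^sup>2 = (\<Sum>b\<in>Basis. (y \<bullet> b)\<^sup>2)"
proof -
  have "(norm y)\<^sup>2 = y \<bullet> y" by (simp add: power2_norm_eq_inner)
  also have "\<dots> = (\<Sum>b\<in>Basis. (y \<bullet> b) * (y \<bullet> b))" by (rule euclidean_inner)
  finally show ?thesis by (simp add: power2_eq_square)
qed

lemma gauss_1d: "(\<integral>\<^sup>+x. ennreal (exp (-(x\<^sup>2)/2)) \<partial>lborel) = ennreal (sqrt (2*pi))"
proof -
  have "(\<integral>\<^sup>+x. ennreal (std_normal_density x) \<partial>lborel) = 1"
    by (subst nn_integral_eq_integral) auto
  moreover have "\<And>x. ennreal (exp (-(x\<^sup>2)/2)) = ennreal (sqrt (2*pi)) * ennreal (std_normal_density x)"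
    by (subst ennreal_mult[symmetric]) (auto simp: std_normal_density_def)
  ultimately show ?thesis by (simp add: nn_integral_cmult)
qed

lemma gauss_C: "(\<integral>\<^sup>+y. ennreal (exp (-(norm y)\<^sup>2/2)) \<partial>(lborel::'a::euclidean_space measure)) =
   ennreal (sqrt (2*pi) ^ DIM('a))"
proof -
  have eq: "ennreal (exp (-(norm y)\<^sup>2/2)) = (\<Prod>b\<in>Basis. ennreal (exp (-((y \<bullet> b)\<^sup>2)/2)))" for y :: 'a
  proof -
    have "-(norm y)\<^sup>2/2 = (\<Sum>b\<in>Basis. -((y \<bullet> b)\<^sup>2)/2)"
      by (simp add: norm_sq_basis sum_negf sum_divide_distrib)
    then have "exp (-(norm y)\<^sup>2/2) = (\<Prod>b\<in>Basis. exp (-((y \<bullet> b)\<^sup>2)/2))"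
      by (simp add: exp_sum)
    then show ?thesis by (simp add: prod_ennreal)
  qed
  have "(\<integral>\<^sup>+y. ennreal (exp (-(norm y)\<^sup>2/2)) \<partial>(lborel::'a measure)) =
      (\<integral>\<^sup>+y. (\<Prod>b\<in>Basis. (\<lambda>b x. ennreal (exp (-(x\<^sup>2)/2))) b (y \<bullet> b)) \<partial>(lborel::'a measure))"
    by (intro nn_integral_cong) (simp only: eq)
  also have "\<dots> = (\<Prod>b\<in>(Basis::'a set). (\<integral>\<^sup>+x. ennreal (exp (-(x\<^sup>2)/2)) \<partial>lborel))"
    by (rule nn_integral_lborel_prod) auto
  also have "\<dots> = ennreal (sqrt (2*pi) ^ DIM('a))"
    by (simp add: gauss_1d[simplified] ennreal_power)
  finally show ?thesis .
qed

lemma gauss_mgf: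
  fixes u :: "'a::euclidean_space"
  assumes u: "norm u = 1"
  shows "(\<integral>\<^sup>+y. ennreal (exp (t * (y \<bullet> u)) * exp (-(norm y)\<^sup>2/2)) \<partial>lborel) =
     ennreal (exp (t\<^sup>2/2)) * (\<integral>\<^sup>+y. ennreal (exp (-(norm y)\<^sup>2/2)) \<partial>(lborel::'a measure))"
proof -
  have uu: "u \<bullet> u = 1" using u by (simp add: power2_norm_eq_inner[symmetric])
  have "(\<integral>\<^sup>+y. ennreal (exp (t * (y \<bullet> u)) * exp (-(norm y)\<^sup>2/2)) \<partial>lborel) =
     (\<integral>\<^sup>+y. ennreal (exp (t * ((t *\<^sub>R u + y) \<bullet> u)) * exp (-(norm (t *\<^sub>R u + y))\<^sup>2/2)) \<partial>lborel)"
    by (rule nn_integral_transl) simp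
  also have "\<dots> = (\<integral>\<^sup>+y. ennreal (exp (t\<^sup>2/2)) * ennreal (exp (-(norm y)\<^sup>2/2)) \<partial>(lborel::'a measure))"
  proof (rule nn_integral_cong)
    fix y :: 'a
    have n1: "(norm (t *\<^sub>R u + y))\<^sup>2 = (t *\<^sub>R u + y) \<bullet> (t *\<^sub>R u + y)"
      by (simp only: power2_norm_eq_inner)
    have n2: "(norm y)\<^sup>2 = y \<bullet> y" by (simp only: power2_norm_eq_inner)
    have n3: "(t *\<^sub>R u + y) \<bullet> (t *\<^sub>R u + y) = t\<^sup>2 + 2*t*(y \<bullet> u) + y \<bullet> y"
      by (simp add: inner_add_left inner_add_right uu inner_commute[of u y] power2_eq_square algebra_simps)
    have n4: "(t *\<^sub>R u + y) \<bullet> u = t + y \<bullet> u"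
      by (simp add: inner_add_left uu)
    have "t * ((t *\<^sub>R u + y) \<bullet> u) + (-(norm (t *\<^sub>R u + y))\<^sup>2/2) = t\<^sup>2/2 + (-(norm y)\<^sup>2/2)"
      unfolding n1 n2 n3 n4 by (simp add: field_simps power2_eq_square)
    then have "exp (t * ((t *\<^sub>R u + y) \<bullet> u)) * exp (-(norm (t *\<^sub>R u + y))\<^sup>2/2) = exp (t\<^sup>2/2) * exp (-(norm y)\<^sup>2/2)"
      by (simp add: exp_add[symmetric])
    then show "ennreal (exp (t * ((t *\<^sub>R u + y) \<bullet> u)) * exp (-(norm (t *\<^sub>R u + y))\<^sup>2/2)) =
        ennreal (exp (t\<^sup>2/2)) * ennreal (exp (-(norm y)\<^sup>2/2))"
      by (simp add: ennreal_mult)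
  qed
  also have "\<dots> = ennreal (exp (t\<^sup>2/2)) * (\<integral>\<^sup>+y. ennreal (exp (-(norm y)\<^sup>2/2)) \<partial>(lborel::'a measure))"
    by (simp add: nn_integral_cmult)
  finally show ?thesis .
qed

lemma ennreal_half_split:
  assumes "0 \<le> A" "0 \<le> B" "0 \<le> c"
  shows "ennreal (c * A + c * B) = ennreal c * ennreal A + ennreal c * ennreal B"
proof -
  have "ennreal (c * A + c * B) = ennreal (c * A) + ennreal (c * B)"
    using assms by (intro ennreal_plus) auto
  also have "ennreal (c * A) = ennreal c * ennreal A" using assms by (intro ennreal_mult) auto
  also have "ennreal (c * B) = ennreal c * ennreal B" using assms by (intro ennreal_mult) auto
  finally show ?thesis .
qed

lemma gauss_cosh:
  fixes u :: "'a::euclidean_space"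
  assumes u: "norm u = 1"
  shows "(\<integral>\<^sup>+y. ennreal (cosh (t * (y \<bullet> u)) * exp (-(norm y)\<^sup>2/2)) \<partial>lborel) =
     ennreal (exp (t\<^sup>2/2) * sqrt (2*pi) ^ DIM('a))"
proof -
  have eq: "ennreal (cosh (t * (y \<bullet> u)) * exp (-(norm y)\<^sup>2/2)) =
     ennreal (1/2) * ennreal (exp (t * (y \<bullet> u)) * exp (-(norm y)\<^sup>2/2)) +
     ennreal (1/2) * ennreal (exp ((-t) * (y \<bullet> u)) * exp (-(norm y)\<^sup>2/2))" for y :: 'a
  proof -
    have X: "cosh (t * (y \<bullet> u)) * exp (-(norm y)\<^sup>2/2) =
      (1/2) * (exp (t * (y \<bullet> u)) * exp (-(norm y)\<^sup>2/2)) + (1/2) * (exp ((-t) * (y \<bullet> u)) * exp (-(norm y)\<^sup>2/2))"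
      by (simp add: cosh_def algebra_simps)
    show ?thesis unfolding X by (rule ennreal_half_split) auto
  qed
  have "(\<integral>\<^sup>+y. ennreal (cosh (t * (y \<bullet> u)) * exp (-(norm y)\<^sup>2/2)) \<partial>lborel) =
     ennreal (1/2) * (\<integral>\<^sup>+y. ennreal (exp (t * (y \<bullet> u)) * exp (-(norm y)\<^sup>2/2)) \<partial>(lborel::'a measure)) +
     ennreal (1/2) * (\<integral>\<^sup>+y. ennreal (exp ((-t) * (y \<bullet> u)) * exp (-(norm y)\<^sup>2/2)) \<partial>(lborel::'a measure))"
  proof -
    have "(\<integral>\<^sup>+y. ennreal (cosh (t * (y \<bullet> u)) * exp (-(norm y)\<^sup>2/2)) \<partial>lborel) =
     (\<integral>\<^sup>+y. ennreal (1/2) * ennreal (exp (t * (y \<bullet> u)) * exp (-(norm y)\<^sup>2/2)) +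
     ennreal (1/2) * ennreal (exp ((-t) * (y \<bullet> u)) * exp (-(norm y)\<^sup>2/2)) \<partial>(lborel::'a measure))"
      by (intro nn_integral_cong eq)
    then show ?thesis by (simp add: nn_integral_add nn_integral_cmult)
  qed
  also have "\<dots> = (ennreal (1/2) + ennreal (1/2)) * ennreal (exp (t\<^sup>2/2) * sqrt (2*pi) ^ DIM('a))"
    using gauss_mgf[OF u, of t, simplified] gauss_mgf[OF u, of "-t", simplified] gauss_C[simplified, where 'a='a]
    by (simp add: ennreal_mult distrib_right)
  also have "ennreal (1/2) + ennreal (1/2) = 1"
    by (subst ennreal_plus[symmetric]) auto
  finally show ?thesis by simp
qed

lemma gauss_Z:
  assumes e: "\<epsilon>\<^sup>2 < 1"
  shows "(\<integral>\<^sup>+y. ennreal (exp (\<epsilon>\<^sup>2 * (norm y)\<^sup>2/2) * exp (-(norm y)\<^sup>2/2)) \<partial>(lborel::'a::euclidean_space measure)) =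
     ennreal ((1 / sqrt (1 - \<epsilon>\<^sup>2)) ^ DIM('a) * sqrt (2*pi) ^ DIM('a))"
proof -
  define s where "s = sqrt (1 - \<epsilon>\<^sup>2)"
  have s: "s > 0" using e by (simp add: s_def)
  have ss: "s\<^sup>2 = 1 - \<epsilon>\<^sup>2" using e by (simp add: s_def)
  define F where "F y = ennreal (exp (-(norm y)\<^sup>2/2))" for y :: 'a
  have [measurable]: "F \<in> borel_measurable borel" unfolding F_def by measurable
  have "(\<integral>\<^sup>+y. ennreal (exp (\<epsilon>\<^sup>2 * (norm y)\<^sup>2/2) * exp (-(norm y)\<^sup>2/2)) \<partial>(lborel::'a measure)) =
      (\<integral>\<^sup>+y. F (s *\<^sub>R y) \<partial>lborel)"
  proof (intro nn_integral_cong)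
    fix y :: 'a
    have "\<epsilon>\<^sup>2 * (norm y)\<^sup>2/2 + (-(norm y)\<^sup>2/2) = -(norm (s *\<^sub>R y))\<^sup>2/2"
      using s by (simp add: power_mult_distrib ss algebra_simps)
    then show "ennreal (exp (\<epsilon>\<^sup>2 * (norm y)\<^sup>2/2) * exp (-(norm y)\<^sup>2/2)) = F (s *\<^sub>R y)"
      by (simp add: F_def exp_add[symmetric])
  qed
  also have "\<dots> = ennreal (\<bar>1/s\<bar>^DIM('a)) * (\<integral>\<^sup>+y. F (s *\<^sub>R ((1/s) *\<^sub>R y)) \<partial>lborel)"
    using s by (intro nn_integral_scale) auto
  also have "\<dots> = ennreal ((1/s)^DIM('a)) * (\<integral>\<^sup>+y. F y \<partial>lborel)"
    using s by simp
  also have "\<dots> = ennreal ((1 / sqrt (1 - \<epsilon>\<^sup>2)) ^ DIM('a) * sqrt (2*pi) ^ DIM('a))"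
    using s by (simp add: F_def gauss_C[simplified] ennreal_mult s_def)
  finally show ?thesis .
qed

lemma gauss_moments:
  fixes u :: "'a::euclidean_space"
  assumes u: "norm u = 1"
  shows "(\<integral>\<^sup>+y. ennreal ((y \<bullet> u)^(2*m) * exp (-(norm y)\<^sup>2/2)) \<partial>(lborel::'a measure)) =
    ennreal (sqrt (2*pi) ^ DIM('a) * fact (2*m) / (2^m * fact m))"
proof -
  define c0 where "c0 = sqrt (2*pi) ^ DIM('a)"
  have c0: "c0 > 0" by (simp add: c0_def)
  define G where "G m = (\<integral>\<^sup>+y. ennreal ((y \<bullet> u)^(2*m) * exp (-(norm y)\<^sup>2/2)) \<partial>(lborel::'a measure))" for m
  have S: "(\<Sum>m. ennreal (t^(2*m) / fact (2*m)) * G m) = ennreal (exp (t\<^sup>2/2) * c0)" for t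
    using nn_integral_cosh_series[of "\<lambda>y. y \<bullet> u" lborel "\<lambda>y. exp (-(norm y)\<^sup>2/2)" t] gauss_cosh[OF u, of t]
    by (simp add: G_def c0_def)
  have fin: "G m < top" for m
  proof -
    have "(\<Sum>m. ennreal (1^(2*m) / fact (2*m)) * G m) < top" using S[of 1] by simp
    then have "ennreal (1^(2*m) / fact (2*m)) * G m < top" by (rule ennreal_suminf_lessD)
    then show ?thesis by (auto simp: ennreal_mult_less_top)
  qed
  define g where "g m = enn2real (G m)" for m
  have Gg: "G m = ennreal (g m)" for m using fin[of m] by (simp add: g_def)
  have g0: "g m \<ge> 0" for m by (simp add: g_def)
  have A: "(\<lambda>m. (g m / fact (2*m)) * x^m) sums (exp (x/2) * c0)" if x: "x \<ge> 0" for x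
  proof -
    define t where "t = sqrt x"
    have tx: "t^(2*m) = x^m" for m using x by (simp add: t_def power_mult)
    have tx2: "t\<^sup>2 = x" using x by (simp add: t_def)
    have "(\<lambda>m. ennreal (t^(2*m) / fact (2*m)) * G m) sums (\<Sum>m. ennreal (t^(2*m) / fact (2*m)) * G m)"
      by (rule summable_sums[OF summableI])
    then have "(\<lambda>m. ennreal (t^(2*m) / fact (2*m)) * G m) sums ennreal (exp (t\<^sup>2/2) * c0)"
      by (simp only: S)
    moreover have "ennreal (t^(2*m) / fact (2*m)) * G m = ennreal ((g m / fact (2*m)) * x^m)" for m
    proof -
      have "ennreal (t^(2*m) / fact (2*m)) * G m = ennreal (t^(2*m) / fact (2*m) * g m)"
        using g0[of m] x by (simp add: Gg tx ennreal_mult'[symmetric])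
      also have "t^(2*m) / fact (2*m) * g m = (g m / fact (2*m)) * x^m" by (simp add: tx)
      finally show ?thesis .
    qed
    ultimately have "(\<lambda>m. ennreal ((g m / fact (2*m)) * x^m)) sums ennreal (exp (x/2) * c0)"
      by (simp add: tx2)
    then show ?thesis using g0 x c0 by (subst (asm) sums_ennreal) auto
  qed
  have B: "(\<lambda>m. (c0 / (2^m * fact m)) * x^m) sums (exp (x/2) * c0)" if x: "x \<ge> 0" for x
  proof -
    have "(\<lambda>m. (x/2)^m /\<^sub>R fact m * c0) sums (exp (x/2) * c0)"
      by (intro sums_mult2 exp_converges)
    then show ?thesis by (simp add: power_divide field_simps)
  qed
  have "g m / fact (2*m) = c0 / (2^m * fact m)"
    by (rule powser_unique[OF A B])
  then have "g m = c0 * fact (2*m) / (2^m * fact m)"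
    by (simp add: field_simps)
  then show ?thesis using Gg[of m] by (simp add: G_def c0_def)
qed

lemma sphere_moment_le:
  fixes u :: "'a::euclidean_space"
  assumes u: "norm u = 1"
  shows "(\<integral>\<^sup>+l. ennreal ((l \<bullet> u)^(2*m)) \<partial>(sphere_uniform::'a measure)) \<le> 1"
proof -
  have "(\<integral>\<^sup>+l. ennreal ((l \<bullet> u)^(2*m)) \<partial>(sphere_uniform::'a measure)) =
     (\<integral>\<^sup>+y. ennreal ((dirv y \<bullet> u)^(2*m)) * indicator (ball 0 1) y \<partial>lborel) / Vb TYPE('a)"
    by (rule sphere_integral) simp
  also have "\<dots> \<le> (\<integral>\<^sup>+y. indicator (ball 0 1) y \<partial>(lborel::'a measure)) / Vb TYPE('a)"
  proof (intro divide_right_mono_ennreal nn_integral_mono)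
    fix y :: 'a
    have "\<bar>dirv y \<bullet> u\<bar> \<le> norm (dirv y) * norm u" by (rule Cauchy_Schwarz_ineq2)
    also have "\<dots> \<le> 1" using u norm_dirv_le[of y] by simp
    finally have "\<bar>dirv y \<bullet> u\<bar>^(2*m) \<le> 1" by (intro power_le_one) auto
    then have "(dirv y \<bullet> u)^(2*m) \<le> 1" by (simp add: power_even_abs)
    then show "ennreal ((dirv y \<bullet> u)^(2*m)) * indicator (ball 0 1) y \<le> indicator (ball 0 1) y"
      by (auto simp: indicator_def)
  qed
  also have "\<dots> = 1"
    using Vb_pos[where 'a='a] Vb_fin[where 'a='a]
    by (simp add: Vb_def ennreal_divide_self less_top)
  finally show ?thesis .
qed

lemma moment_factor:
  fixes u :: "'a::euclidean_space"
  assumes u: "norm u = 1"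
  shows "(\<integral>\<^sup>+y. ennreal ((y \<bullet> u)^(2*m) * exp (-(norm y)\<^sup>2/2)) \<partial>(lborel::'a measure)) =
    (\<integral>\<^sup>+l. ennreal ((l \<bullet> u)^(2*m)) \<partial>(sphere_uniform::'a measure)) *
    (\<integral>\<^sup>+y. ennreal ((norm y)^(2*m) * exp (-(norm y)\<^sup>2/2)) \<partial>(lborel::'a measure))"
proof -
  have fin: "(\<integral>\<^sup>+l. ennreal ((l \<bullet> u)^(2*m)) \<partial>(sphere_uniform::'a measure)) \<noteq> \<infinity>"
    using sphere_moment_le[OF u, of m] by (auto simp: top_unique)
  have "(\<integral>\<^sup>+y. ennreal ((y \<bullet> u)^(2*m) * exp (-(norm y)\<^sup>2/2)) \<partial>(lborel::'a measure)) =
     (\<integral>\<^sup>+y. (\<lambda>l. ennreal ((l \<bullet> u)^(2*m))) (dirv y) * (\<lambda>r. ennreal (r^(2*m) * exp (-r\<^sup>2/2))) (norm y) \<partial>lborel)"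
  proof (rule nn_integral_cong)
    fix y :: 'a
    have "(dirv y \<bullet> u) * norm y = y \<bullet> u"
      by (cases "y = 0") (simp_all add: dirv_def)
    then have "(dirv y \<bullet> u)^(2*m) * ((norm y)^(2*m) * exp (-(norm y)\<^sup>2/2)) = (y \<bullet> u)^(2*m) * exp (-(norm y)\<^sup>2/2)"
      by (metis mult.assoc power_mult_distrib)
    then show "ennreal ((y \<bullet> u)^(2*m) * exp (-(norm y)\<^sup>2/2)) =
      (\<lambda>l. ennreal ((l \<bullet> u)^(2*m))) (dirv y) * (\<lambda>r. ennreal (r^(2*m) * exp (-r\<^sup>2/2))) (norm y)"
      by (simp add: ennreal_mult[symmetric])
  qed
  also have "\<dots> = (\<integral>\<^sup>+l. ennreal ((l \<bullet> u)^(2*m)) \<partial>(sphere_uniform::'a measure)) *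
    (\<integral>\<^sup>+y. ennreal ((norm y)^(2*m) * exp (-(norm y)\<^sup>2/2)) \<partial>(lborel::'a measure))"
    by (rule factorization[OF _ _ fin]) auto
  finally show ?thesis .
qed

lemma sets_sphere[simp, measurable_cong]: "sets (sphere_uniform::'a::euclidean_space measure) = sets borel"
  by (simp add: sphere_uniform_def)

lemma Z_series:
  assumes e: "\<epsilon>\<^sup>2 < 1"
  shows "(\<Sum>m. ennreal ((\<epsilon>\<^sup>2/2)^m / fact m) *
      (\<integral>\<^sup>+y. ennreal ((norm y)^(2*m) * exp (-(norm y)\<^sup>2/2)) \<partial>(lborel::'a::euclidean_space measure))) =
    ennreal ((1 / sqrt (1 - \<epsilon>\<^sup>2)) ^ DIM('a) * sqrt (2*pi) ^ DIM('a))"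
proof -
  have "(\<integral>\<^sup>+y. ennreal (exp (\<epsilon>\<^sup>2 * (norm y)\<^sup>2/2) * exp (-(norm y)\<^sup>2/2)) \<partial>(lborel::'a measure)) =
    (\<integral>\<^sup>+y. (\<Sum>m. ennreal ((\<epsilon>\<^sup>2/2)^m / fact m) * ennreal ((norm y)^(2*m) * exp (-(norm y)\<^sup>2/2))) \<partial>(lborel::'a measure))"
  proof (rule nn_integral_cong)
    fix y :: 'a
    have "(\<lambda>m. (\<epsilon>\<^sup>2 * (norm y)\<^sup>2/2)^m /\<^sub>R fact m * exp (-(norm y)\<^sup>2/2)) sums
        (exp (\<epsilon>\<^sup>2 * (norm y)\<^sup>2/2) * exp (-(norm y)\<^sup>2/2))"
      by (intro sums_mult2 exp_converges)
    then have "(\<Sum>m. ennreal ((\<epsilon>\<^sup>2 * (norm y)\<^sup>2/2)^m /\<^sub>R fact m * exp (-(norm y)\<^sup>2/2))) =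
        ennreal (exp (\<epsilon>\<^sup>2 * (norm y)\<^sup>2/2) * exp (-(norm y)\<^sup>2/2))"
      by (intro suminf_ennreal_eq) auto
    moreover have "ennreal ((\<epsilon>\<^sup>2 * (norm y)\<^sup>2/2)^m /\<^sub>R fact m * exp (-(norm y)\<^sup>2/2)) =
        ennreal ((\<epsilon>\<^sup>2/2)^m / fact m) * ennreal ((norm y)^(2*m) * exp (-(norm y)\<^sup>2/2))" for m
    proof -
      have "(\<epsilon>\<^sup>2 * (norm y)\<^sup>2/2)^m /\<^sub>R fact m * exp (-(norm y)\<^sup>2/2) =
          ((\<epsilon>\<^sup>2/2)^m / fact m) * ((norm y)^(2*m) * exp (-(norm y)\<^sup>2/2))"
        by (simp add: power_mult_distrib power_mult field_simps flip: power_mult)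
      then show ?thesis by (simp add: ennreal_mult'[symmetric])
    qed
    ultimately show "ennreal (exp (\<epsilon>\<^sup>2 * (norm y)\<^sup>2/2) * exp (-(norm y)\<^sup>2/2)) =
      (\<Sum>m. ennreal ((\<epsilon>\<^sup>2/2)^m / fact m) * ennreal ((norm y)^(2*m) * exp (-(norm y)\<^sup>2/2)))"
      by simp
  qed
  also have "\<dots> = (\<Sum>m. (\<integral>\<^sup>+y. ennreal ((\<epsilon>\<^sup>2/2)^m / fact m) * ennreal ((norm y)^(2*m) * exp (-(norm y)\<^sup>2/2)) \<partial>(lborel::'a measure)))"
    by (rule nn_integral_suminf) auto
  also have "\<dots> = (\<Sum>m. ennreal ((\<epsilon>\<^sup>2/2)^m / fact m) *
      (\<integral>\<^sup>+y. ennreal ((norm y)^(2*m) * exp (-(norm y)\<^sup>2/2)) \<partial>(lborel::'a measure)))"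
    by (simp add: nn_integral_cmult)
  finally show ?thesis using gauss_Z[OF e, where 'a='a] by simp
qed

lemma sphere_eq_distr: "(sphere_uniform::'a::euclidean_space measure) =
    distr (uniform_measure lborel (ball 0 1)) borel dirv"
  unfolding sphere_uniform_def dirv_def[abs_def] ..

lemma Phi_integrable: "integrable (sphere_uniform::'a::euclidean_space measure) (\<lambda>l. exp (l \<bullet> v))"
proof -
  interpret P: prob_space "uniform_measure lborel (ball (0::'a) 1)"
    using Vb_pos[where 'a='a] Vb_fin[where 'a='a]
    by (intro prob_space_uniform_measure) (auto simp: Vb_def)
  have "integrable (uniform_measure lborel (ball (0::'a) 1)) (\<lambda>y. exp (dirv y \<bullet> v))"
  proof (rule P.integrable_const_bound[where B="exp (norm v)"])
    show "AE x in uniform_measure lborel (ball 0 1). norm (exp (dirv x \<bullet> v)) \<le> exp (norm v)"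
    proof (intro AE_I2)
      fix x :: 'a
      have "dirv x \<bullet> v \<le> norm (dirv x) * norm v" by (rule norm_cauchy_schwarz)
      also have "\<dots> \<le> norm v" using norm_dirv_le[of x] by (simp add: mult_left_le_one_le)
      finally show "norm (exp (dirv x \<bullet> v)) \<le> exp (norm v)" by simp
    qed
  qed simp
  then show ?thesis unfolding sphere_eq_distr
    by (subst integrable_distr_eq) auto
qed

lemma Phi_series:
  fixes u :: "'a::euclidean_space"
  assumes u: "norm u = 1"
  shows "ennreal (Phi (r *\<^sub>R u)) =
    (\<Sum>m. ennreal (r^(2*m) / fact (2*m)) * (\<integral>\<^sup>+l. ennreal ((l \<bullet> u)^(2*m)) \<partial>(sphere_uniform::'a measure)))"
proof -
  define v where "v = r *\<^sub>R u"
  have "ennreal (Phi v) = (\<integral>\<^sup>+l. ennreal (exp (l \<bullet> v)) \<partial>(sphere_uniform::'a measure))"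
    unfolding Phi_def by (rule nn_integral_eq_integral[symmetric]) (auto intro: Phi_integrable)
  also have "\<dots> = (\<integral>\<^sup>+l. ennreal (cosh (r * (l \<bullet> u)) * 1) \<partial>(sphere_uniform::'a measure))"
  proof -
    have "(\<integral>\<^sup>+l. ennreal (cosh (r * (l \<bullet> u)) * 1) \<partial>(sphere_uniform::'a measure)) =
      (\<integral>\<^sup>+l. ennreal (1/2) * ennreal (exp (l \<bullet> v)) + ennreal (1/2) * ennreal (exp ((- l) \<bullet> v)) \<partial>sphere_uniform)"
    proof (rule nn_integral_cong)
      fix l :: 'a
      have "cosh (r * (l \<bullet> u)) * 1 = (1/2) * exp (l \<bullet> v) + (1/2) * exp ((- l) \<bullet> v)"
        by (simp add: cosh_def v_def field_simps)
      then show "ennreal (cosh (r * (l \<bullet> u)) * 1) = ennreal (1/2) * ennreal (exp (l \<bullet> v)) + ennreal (1/2) * ennreal (exp ((- l) \<bullet> v))"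
        by (simp only: ennreal_half_split[symmetric]) (rule ennreal_half_split; simp)
    qed
    also have "\<dots> = ennreal (1/2) * (\<integral>\<^sup>+l. ennreal (exp (l \<bullet> v)) \<partial>sphere_uniform) +
        ennreal (1/2) * (\<integral>\<^sup>+l. (\<lambda>l. ennreal (exp (l \<bullet> v))) (- l) \<partial>(sphere_uniform::'a measure))"
      by (simp add: nn_integral_add nn_integral_cmult)
    also have "(\<integral>\<^sup>+l. (\<lambda>l. ennreal (exp (l \<bullet> v))) (- l) \<partial>(sphere_uniform::'a measure)) =
        (\<integral>\<^sup>+l. ennreal (exp (l \<bullet> v)) \<partial>sphere_uniform)"
      by (rule sphere_sym) simp
    also have "ennreal (1/2) * (\<integral>\<^sup>+l. ennreal (exp (l \<bullet> v)) \<partial>(sphere_uniform::'a measure)) +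
        ennreal (1/2) * (\<integral>\<^sup>+l. ennreal (exp (l \<bullet> v)) \<partial>sphere_uniform) =
        (ennreal (1/2) + ennreal (1/2)) * (\<integral>\<^sup>+l. ennreal (exp (l \<bullet> v)) \<partial>sphere_uniform)"
      by (simp add: distrib_right)
    also have "ennreal (1/2) + ennreal (1/2) = 1"
      by (subst ennreal_plus[symmetric]) auto
    finally show ?thesis by simp
  qed
  also have "\<dots> = (\<Sum>m. ennreal (r^(2*m) / fact (2*m)) * (\<integral>\<^sup>+l. ennreal ((l \<bullet> u)^(2*m) * 1) \<partial>(sphere_uniform::'a measure)))"
    by (rule nn_integral_cosh_series) auto
  finally show ?thesis by (simp add: v_def)
qed

lemma exp_series_real: "(\<lambda>m. (x::real)^m / fact m) sums exp x"
  using exp_converges[of x] by (simp add: scaleR_conv_of_real divide_inverse_commute)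

lemma amgm_lam:
  fixes a b q l :: real
  assumes "0 \<le> a" "0 \<le> b" "0 \<le> q" "a * b = q\<^sup>2" "l > 0"
  shows "2 * q \<le> l * a + b / l"
proof -
  have "0 \<le> (l * a - q)\<^sup>2" by simp
  then have "2 * q * l * a \<le> l\<^sup>2 * a\<^sup>2 + q\<^sup>2" by (simp add: power2_eq_square algebra_simps)
  also have "q\<^sup>2 = a * b" using assms by simp
  finally have *: "2 * q * l * a \<le> l\<^sup>2 * a\<^sup>2 + a * b" .
  show ?thesis
  proof (cases "a = 0")
    case True
    then have "q = 0" using assms by simp
    then show ?thesis using assms True by simp
  next
    case False
    then have a: "a > 0" using assms by simp
    have "(l * a + b / l) * (l * a) = l\<^sup>2 * a\<^sup>2 + a * b"
      using assms by (simp add: power2_eq_square field_simps)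
    then have "2 * q * (l * a) \<le> (l * a + b / l) * (l * a)"
      using * by (simp add: mult_ac)
    then show ?thesis using a assms by (simp add: mult_le_cancel_right)
  qed
qed

lemma abq_lemma:
  fixes r e M P c0 :: real
  assumes c0: "c0 > 0" and MP: "M * P = c0 * fact (2*m) / (2^m * fact m)"
  shows "(r^(2*m) / fact (2*m) * M) * ((e\<^sup>2/2)^m / fact m * P / c0) = ((e * r / 2)^m / fact m)\<^sup>2"
proof -
  have f1: "(fact (2*m) :: real) > 0" "(fact m :: real) > 0" by simp_all
  have "(r^(2*m) / fact (2*m) * M) * ((e\<^sup>2/2)^m / fact m * P / c0) =
      r^(2*m) * (e\<^sup>2/2)^m * (M * P) / (fact (2*m) * fact m * c0)"
    by (simp add: algebra_simps)
  also have "\<dots> = r^(2*m) * (e\<^sup>2/2)^m / (2^m * fact m * fact m)"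
    unfolding MP using c0 f1 by (simp add: divide_simps)
  finally have L: "(r^(2*m) / fact (2*m) * M) * ((e\<^sup>2/2)^m / fact m * P / c0) = 
     r^(2*m) * (e\<^sup>2/2)^m / (2^m * fact m * fact m)" .
  have r2: "r^(2*m) = (r^m)\<^sup>2" by (simp add: power_mult[symmetric] mult.commute)
  have e2: "(e\<^sup>2/2)^m = (e^m)\<^sup>2 / 2^m" by (simp add: power_divide power_mult[symmetric] mult.commute)
  have R: "((e * r / 2)^m / fact m)\<^sup>2 = (e^m)\<^sup>2 * (r^m)\<^sup>2 / ((2^m)\<^sup>2 * (fact m)\<^sup>2)"
    by (simp add: power_divide power_mult_distrib)
  show ?thesis unfolding L unfolding R r2 e2 by (simp add: power2_eq_square field_simps)
qed
lemma final_arith: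
  fixes E s A :: real
  assumes E: "E > 0" and s: "s > 0" and H: "2 * E \<le> ((1/s)^n / E) * A + (1/s)^n / ((1/s)^n / E)"
  shows "s^n * (E * E) \<le> A"
proof -
  have sn: "(1/s)^n > 0" using s by simp
  have "(1/s)^n / ((1/s)^n / E) = E" using sn E s by simp
  with H have "E \<le> ((1/s)^n / E) * A" by simp
  then have "E * E \<le> E * (((1/s)^n / E) * A)" using E by (intro mult_left_mono) auto
  also have "E * (((1/s)^n / E) * A) = (1/s)^n * A" using E by simp
  finally have "E * E \<le> (1/s)^n * A" .
  then have "s^n * (E * E) \<le> s^n * ((1/s)^n * A)" using s by (intro mult_left_mono) auto
  also have "s^n * ((1/s)^n * A) = A" using s by (simp add: power_one_over field_simps)
  finally show ?thesis .
qed

lemma sqrt_pow_powr: "x > 0 \<Longrightarrow> sqrt x ^ n = x powr (real n / 2)"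
proof -
  assume x: "x > 0"
  have "sqrt x ^ n = (x powr (1/2)) ^ n" using x by (simp add: powr_half_sqrt)
  also have "\<dots> = (x powr (1/2)) powr (real n)" using x by (simp add: powr_realpow)
  also have "\<dots> = x powr (real n / 2)" by (simp add: powr_powr)
  finally show ?thesis .
qed
lemma main_general:
  fixes v :: "'a::euclidean_space"
  assumes e0: "0 < \<epsilon>" and e1: "\<epsilon> < 1"
  shows "Phi v \<ge> (1 - \<epsilon>\<^sup>2) powr (real DIM('a) / 2) * exp (\<epsilon> * norm v)"
proof -
  obtain u :: 'a where u: "norm u = 1" and v: "v = norm v *\<^sub>R u"
  proof (cases "v = 0")
    case True
    obtain b :: 'a where "b \<in> Basis" using nonempty_Basis by blast
    then show ?thesis using that[of b] True by simp
  next
    case False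
    then show ?thesis using that[of "v /\<^sub>R norm v"] by simp
  qed
  define r where "r = norm v"
  have r0: "r \<ge> 0" by (simp add: r_def)
  define n where "n = DIM('a)"
  define c0 where "c0 = sqrt (2*pi) ^ n"
  have c0: "c0 > 0" by (simp add: c0_def)
  define s where "s = sqrt (1 - \<epsilon>\<^sup>2)"
  have e2: "\<epsilon>\<^sup>2 < 1" using e0 e1 by (simp add: power_less_one_iff abs_less_iff)
  have s0: "s > 0" using e2 by (simp add: s_def)
  define M where "M m = (\<integral>\<^sup>+l. ennreal ((l \<bullet> u)^(2*m)) \<partial>(sphere_uniform::'a measure))" for m
  define P where "P m = (\<integral>\<^sup>+y. ennreal ((norm y)^(2*m) * exp (-(norm y)\<^sup>2/2)) \<partial>(lborel::'a measure))" for m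
  have MP: "M m * P m = ennreal (c0 * fact (2*m) / (2^m * fact m))" for m
    using moment_factor[OF u, of m] gauss_moments[OF u, of m] by (simp add: M_def P_def c0_def n_def)
  have Mfin: "M m < top" for m
    using sphere_moment_le[OF u, of m] by (simp add: M_def le_less_trans)
  have Zs: "(\<Sum>m. ennreal ((\<epsilon>\<^sup>2/2)^m / fact m) * P m) = ennreal ((1/s)^n * c0)"
    using Z_series[OF e2, where 'a='a] by (simp add: P_def s_def n_def c0_def)
  have Pfin: "P m < top" for m
  proof -
    have "(\<Sum>m. ennreal ((\<epsilon>\<^sup>2/2)^m / fact m) * P m) < top" using Zs by simp
    then have "ennreal ((\<epsilon>\<^sup>2/2)^m / fact m) * P m < top" by (rule ennreal_suminf_lessD)
    then show ?thesis using e0 by (auto simp: ennreal_mult_less_top)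
  qed
  define Mr where "Mr m = enn2real (M m)" for m
  define Pr where "Pr m = enn2real (P m)" for m
  have Mr: "M m = ennreal (Mr m)" "Mr m \<ge> 0" for m using Mfin[of m] by (simp_all add: Mr_def)
  have Pr: "P m = ennreal (Pr m)" "Pr m \<ge> 0" for m using Pfin[of m] by (simp_all add: Pr_def)
  have MPr: "Mr m * Pr m = c0 * fact (2*m) / (2^m * fact m)" for m
  proof -
    have "ennreal (Mr m * Pr m) = ennreal (c0 * fact (2*m) / (2^m * fact m))"
      using MP[of m] Mr(2)[of m] Pr(2)[of m] by (simp add: Mr(1) Pr(1) ennreal_mult)
    then show ?thesis using Mr(2)[of m] Pr(2)[of m] c0 by (subst (asm) ennreal_inj) auto
  qed
  define a where "a m = r^(2*m) / fact (2*m) * Mr m" for m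
  define b where "b m = (\<epsilon>\<^sup>2/2)^m / fact m * Pr m / c0" for m
  define q where "q m = (\<epsilon> * r / 2)^m / fact m" for m
  have a0: "a m \<ge> 0" for m using Mr(2)[of m] by (simp add: a_def)
  have b0: "b m \<ge> 0" for m using Pr(2)[of m] c0 by (simp add: b_def)
  have q0: "q m \<ge> 0" for m using e0 r0 by (simp add: q_def)
  have Phi0: "Phi v \<ge> 0"
    unfolding Phi_def by (rule Bochner_Integration.integral_nonneg) simp
  have Asums: "a sums Phi v"
  proof -
    have am: "ennreal (r^(2*m) / fact (2*m)) * ennreal (Mr m) = ennreal (a m)" for m
      using Mr(2)[of m] r0 by (simp add: a_def ennreal_mult'[symmetric])
    have "ennreal (Phi v) = (\<Sum>m. ennreal (a m))"
      using Phi_series[OF u, of r] v by (simp add: r_def[symmetric] M_def[symmetric] Mr(1) am)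
    moreover have "(\<lambda>m. ennreal (a m)) sums (\<Sum>m. ennreal (a m))"
      by (rule summable_sums[OF summableI])
    ultimately have "(\<lambda>m. ennreal (a m)) sums ennreal (Phi v)" by simp
    then show ?thesis using a0 Phi0 by (subst (asm) sums_ennreal) auto
  qed
  have Bsums: "b sums ((1/s)^n)"
  proof -
    have "(\<lambda>m. ennreal ((\<epsilon>\<^sup>2/2)^m / fact m * Pr m)) sums (\<Sum>m. ennreal ((\<epsilon>\<^sup>2/2)^m / fact m * Pr m))"
      by (rule summable_sums[OF summableI])
    moreover have "(\<Sum>m. ennreal ((\<epsilon>\<^sup>2/2)^m / fact m * Pr m)) = ennreal ((1/s)^n * c0)"
    proof -
      have bm: "ennreal ((\<epsilon>\<^sup>2/2)^m / fact m) * ennreal (Pr m) = ennreal ((\<epsilon>\<^sup>2/2)^m / fact m * Pr m)" for m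
        using Pr(2)[of m] by (simp add: ennreal_mult'[symmetric])
      show ?thesis using Zs by (simp add: Pr(1) bm)
    qed
    ultimately have "(\<lambda>m. ennreal ((\<epsilon>\<^sup>2/2)^m / fact m * Pr m)) sums ennreal ((1/s)^n * c0)" by simp
    then have "(\<lambda>m. (\<epsilon>\<^sup>2/2)^m / fact m * Pr m) sums ((1/s)^n * c0)"
      using Pr(2) s0 c0 by (subst (asm) sums_ennreal) auto
    then have "(\<lambda>m. (\<epsilon>\<^sup>2/2)^m / fact m * Pr m / c0) sums ((1/s)^n * c0 / c0)"
      by (rule sums_divide)
    moreover have "(1/s)^n * c0 / c0 = (1/s)^n" using c0 by simp
    moreover have "b = (\<lambda>m. (\<epsilon>\<^sup>2/2)^m / fact m * Pr m / c0)" by (rule ext) (simp only: b_def)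
    ultimately show ?thesis by (simp only:)
  qed
  define E where "E = exp (\<epsilon> * r / 2)"
  have E0: "E > 0" by (simp add: E_def)
  have Qsums: "q sums E"
  proof -
    show ?thesis using exp_series_real[of "\<epsilon> * r / 2"] unfolding q_def E_def .
  qed
  have abq: "a m * b m = (q m)\<^sup>2" for m
    unfolding a_def b_def q_def by (rule abq_lemma[OF c0 MPr])
  define l where "l = (1/s)^n / E"
  have l0: "l > 0" using s0 E0 by (simp add: l_def)
  have "2 * E \<le> l * Phi v + (1/s)^n / l"
  proof (rule sums_le)
    show "2 * q m \<le> l * a m + b m / l" for m by (intro amgm_lam a0 b0 q0 abq l0)
    show "(\<lambda>m. 2 * q m) sums (2 * E)" by (rule sums_mult[OF Qsums])
    show "(\<lambda>m. l * a m + b m / l) sums (l * Phi v + (1/s)^n / l)"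
      by (intro sums_add sums_mult Asums sums_divide Bsums)
  qed
  then have F1: "s^n * (E * E) \<le> Phi v" unfolding l_def by (rule final_arith[OF E0 s0])
  have F2: "E * E = exp (\<epsilon> * norm v)" unfolding E_def r_def exp_add[symmetric] by simp
  have F3: "s^n = (1 - \<epsilon>\<^sup>2) powr (real DIM('a) / 2)"
    unfolding s_def n_def using e2 by (intro sqrt_pow_powr) simp
  show ?thesis using F1 unfolding F2 F3 .
qed

theorem lemma1:
  fixes X :: "real ^ 'n" and lam \<epsilon> :: real
  assumes "0 < \<epsilon>" and "\<epsilon> < 1"
  shows "Phi (lam *\<^sub>R X) \<ge> (1 - \<epsilon>\<^sup>2) powr (real CARD('n) / 2) * exp (\<epsilon> * norm (lam *\<^sub>R X))"
  using main_general[OF assms, of "lam *\<^sub>R X"] by simp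

end
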